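(* Let $V^{2n}$ be a real vector space with $J\in\mathrm{Aut}(V)$, $J^2=-I$, and a positive definite inner product $(\,,\,)$ for which $J$ is an isometry. Let $\mathbb{L}^p$, $p\geq 2$, be a real vector space with a Lorentzian inner product $\langle\,,\,\rangle$, let $\alpha\colon V^{2n}\times V^{2n}\to\mathbb{L}^p$ be a symmetric bilinear form, and suppose there is a light-like $w\in\mathbb{L}^p$ with $\langle\alpha(X,Y),w\rangle=-(X,Y)$ for all $X,Y$. Let $\beta,\gamma\colon V^{2n}\times V^{2n}\to W^{p,p}$ be defined by $\beta(X,Y)=(\alpha(X,Y)+\alpha(JX,JY),\alpha(X,JY)-\alpha(JX,Y))$ and $\gamma(X,Y)=(\alpha(X,Y),\alpha(X,JY))$. Assume $\beta$ is flat and $$\langle\!\langle\beta(X,Y),\gamma(Z,T)\rangle\!\rangle=\langle\!\langle\beta(X,T),\gamma(Z,Y)\rangle\!\rangle\quad\text{for all }X,Y,Z,T\in V^{2n}.$$ If $\mathcal{S}(\beta)$ is degenerate and $s\leq n-1$, then there is a $J$-invariant vector subspace $P^{2m}\subset V^{2n}$ with $m\geq n-s+1$ such that $$\langle\alpha(S,S),\alpha(JS,JS)\rangle-\langle\alpha(S,JS),\alpha(S,JS)\rangle\leq 0\quad\text{for all }S\in P^{2m}.$$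
   Context: $W^{p,p}=\mathbb{L}^p\oplus\mathbb{L}^p$ carries the inner product $\langle\!\langle(\xi,\bar\xi),(\eta,\bar\eta)\rangle\!\rangle=\langle\xi,\eta\rangle-\langle\bar\xi,\bar\eta\rangle$. $\beta$ is flat if $\langle\!\langle\beta(X,Y),\beta(Z,T)\rangle\!\rangle=\langle\!\langle\beta(X,T),\beta(Z,Y)\rangle\!\rangle$ for all $X,Y,Z,T$. $\mathcal{S}(\beta)=\mathrm{span}\{\beta(X,Y):X,Y\in V\}$; it is degenerate if $\mathcal S(\beta)\cap\mathcal S(\beta)^\perp\neq0$ with respect to $\langle\!\langle\,,\,\rangle\!\rangle$. $s=\dim U_0^s$, where $U_0^s=\pi_1(\mathcal{S}(\beta))\subset\mathbb{L}^p$ is the projection of $\mathcal S(\beta)$ onto the first factor. *)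

theory Defs
  imports "HOL-Analysis.Analysis"
begin

definition lorentzian :: "('l::euclidean_space \<Rightarrow> 'l \<Rightarrow> real) \<Rightarrow> bool" where
  "lorentzian g \<longleftrightarrow>
     (\<forall>x. linear (g x)) \<and> (\<forall>x y. g x y = g y x) \<and>
     (\<exists>B. independent B \<and> span B = UNIV \<and>
          (\<forall>b\<in>B. \<forall>c\<in>B. b \<noteq> c \<longrightarrow> g b c = 0) \<and>
          (\<exists>e\<in>B. g e e = -1 \<and> (\<forall>b\<in>B - {e}. g b b = 1)))"

definition Wip :: "('l \<Rightarrow> 'l \<Rightarrow> real) \<Rightarrow> 'l \<times> 'l \<Rightarrow> 'l \<times> 'l \<Rightarrow> real" where
  "Wip g u v = g (fst u) (fst v) - g (snd u) (snd v)"

definition flat_form :: "('l \<Rightarrow> 'l \<Rightarrow> real) \<Rightarrow> ('v \<Rightarrow> 'v \<Rightarrow> 'l \<times> 'l) \<Rightarrow> bool" where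
  "flat_form g \<beta> \<longleftrightarrow>
     (\<forall>X Y Z T. Wip g (\<beta> X Y) (\<beta> Z T) = Wip g (\<beta> X T) (\<beta> Z Y))"

definition Sspace :: "('v \<Rightarrow> 'v \<Rightarrow> 'l::real_vector \<times> 'l) \<Rightarrow> ('l \<times> 'l) set" where
  "Sspace \<beta> = span {\<beta> X Y | X Y. True}"

definition degenerate_sub :: "('l \<Rightarrow> 'l \<Rightarrow> real) \<Rightarrow> ('l::real_vector \<times> 'l) set \<Rightarrow> bool" where
  "degenerate_sub g S \<longleftrightarrow> (\<exists>v\<in>S. v \<noteq> 0 \<and> (\<forall>u\<in>S. Wip g v u = 0))"

end

theory Submission
  imports Defs
begin

lemma bil:
  fixes h :: "'a::real_vector \<Rightarrow> 'a \<Rightarrow> 'c::real_vector"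
  assumes lin: "\<And>x. linear (h x)" and sym: "\<And>x y. h x y = h y x"
  shows "h a (b + c) = h a b + h a c" "h (b + c) a = h b a + h c a"
    "h a (b - c) = h a b - h a c" "h (b - c) a = h b a - h c a"
    "h a (- b) = - h a b" "h (- b) a = - h b a"
    "h a (r *\<^sub>R b) = r *\<^sub>R h a b" "h (r *\<^sub>R b) a = r *\<^sub>R h b a"
    "h a 0 = 0" "h 0 a = 0"
  using linear_add[OF lin] linear_diff[OF lin] linear_neg[OF lin] linear_scale[OF lin] linear_0[OF lin]
  by (simp_all add: sym[of _ a])

lemma rank_nullity:
  fixes f :: "'a::euclidean_space \<Rightarrow> 'b::real_vector"
  assumes lf: "linear f" and V: "subspace V"
  shows "dim (f ` V) + dim {x\<in>V. f x = 0} = dim V"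
proof -
  let ?K = "{x\<in>V. f x = 0}"
  let ?W = "{y\<in>V. \<forall>x\<in>?K. orthogonal x y}"
  have sK: "subspace ?K"
    using V lf by (auto simp: subspace_def linear_add linear_scale linear_0)
  have sW: "subspace ?W"
    using V by (auto simp: subspace_def orthogonal_clauses)
  have d1: "dim ?W + dim ?K = dim V"
    by (rule dim_subspace_orthogonal_to_vectors[OF sK V]) auto
  have inj: "inj_on f (span ?W)"
  proof -
    have e: "span ?W = ?W" using sW by (simp add: span_eq_iff)
    have iW: "inj_on f ?W"
    proof (rule inj_onI)
      fix x y assume x: "x \<in> ?W" and y: "y \<in> ?W" and e: "f x = f y"
      have "x - y \<in> ?W" using sW x y by (rule subspace_diff)
      moreover have "f (x - y) = 0" using e lf by (simp add: linear_diff)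
      ultimately have "x - y \<in> ?K" by auto
      with \<open>x - y \<in> ?W\<close> have "orthogonal (x-y) (x-y)" by blast
      then show "x = y" by (simp add: orthogonal_self)
    qed
    show ?thesis by (simp only: e) (rule iW)
  qed
  have img: "f ` ?W = f ` V"
  proof
    show "f ` ?W \<subseteq> f ` V" by auto
    show "f ` V \<subseteq> f ` ?W"
    proof
      fix u assume "u \<in> f ` V"
      then obtain v where v: "v \<in> V" "u = f v" by auto
      obtain y z where yz: "y \<in> span ?K" "\<And>w. w \<in> span ?K \<Longrightarrow> orthogonal z w" "v = y + z"
        using orthogonal_subspace_decomp_exists[of ?K v] by blast
      have eK: "span ?K = ?K" by (rule span_eq_iff[THEN iffD2, OF sK])
      have yK: "y \<in> ?K" using yz(1) by (simp only: eK)
      have zeq: "z = v - y" using yz(3) by simp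
      have zV: "z \<in> V" unfolding zeq using subspace_diff[OF V v(1)] yK by blast
      have "\<forall>x\<in>?K. orthogonal x z"
      proof
        fix x assume "x \<in> ?K"
        then have "x \<in> span ?K" by (rule span_base)
        then have "orthogonal z x" by (rule yz(2))
        then show "orthogonal x z" by (simp add: orthogonal_commute)
      qed
      then have "z \<in> ?W" using zV by blast
      moreover have "f v = f z" using yz(3) yK lf by (simp add: linear_add)
      ultimately show "u \<in> f ` ?W" using v by auto
    qed
  qed
  have "dim (f ` ?W) = dim ?W" by (rule dim_image_eq[OF lf inj])
  then have "dim (f ` V) = dim ?W" by (simp only: img)
  then show ?thesis using d1 by linarith
qed

lemma even_dim:
  fixes J :: "'a::euclidean_space \<Rightarrow> 'a"
  assumes J_lin: "linear J" and J_sq: "\<And>X. J (J X) = - X"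
    and J_isom: "\<And>X Y. inner (J X) (J Y) = inner X Y"
  shows "subspace P \<Longrightarrow> J ` P \<subseteq> P \<Longrightarrow> even (dim P)"
proof (induction "dim P" arbitrary: P rule: less_induct)
  case less
  have skew: "inner x (J x) = 0" for x
  proof -
    have "inner x (J x) = inner (J x) (J (J x))" by (simp add: J_isom)
    also have "\<dots> = - inner x (J x)" by (simp add: J_sq inner_commute)
    finally show ?thesis by simp
  qed
  have skew2: "inner (J a) b = - inner a (J b)" for a b
  proof -
    have "inner (J a) b = inner (J (J a)) (J b)" by (simp add: J_isom)
    then show ?thesis by (simp add: J_sq)
  qed
  show ?case
  proof (cases "P \<subseteq> {0}")
    case True
    have "dim P \<le> dim {0::'a}" by (rule dim_subset[OF True])
    then have "dim P = 0" by simp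
    then show ?thesis by (simp only: even_zero)
  next
    case False
    then obtain x where x: "x \<in> P" "x \<noteq> 0" by auto
    have Jx: "J x \<in> P" using x less.prems by auto
    have Jx0: "J x \<noteq> 0"
    proof
      assume "J x = 0"
      then have "J (J x) = 0" using J_lin linear_0 by auto
      then show False using x J_sq by simp
    qed
    have notin: "x \<notin> span {J x}"
    proof
      assume "x \<in> span {J x}"
      then obtain c where xc: "x = c *\<^sub>R J x" by (auto simp: span_singleton)
      have "inner x x = inner (c *\<^sub>R J x) x" by (subst (1) xc) (rule refl)
      then have "inner x x = c * inner (J x) x" by simp
      also have "\<dots> = 0" using skew[of x] by (simp add: inner_commute)
      finally show False using x by simp
    qed
    let ?A = "{x, J x}"
    have dA: "dim ?A = 2" using notin Jx0 by (simp add: dim_insert)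
    let ?Q = "{y\<in>P. \<forall>a\<in>span ?A. orthogonal a y}"
    have sA: "subspace (span ?A)" by simp
    have AP: "span ?A \<subseteq> P" using x Jx less.prems(1) by (simp add: span_minimal)
    have d: "dim ?Q + dim (span ?A) = dim P"
      by (rule dim_subspace_orthogonal_to_vectors[OF sA less.prems(1) AP])
    have Qeq: "?Q = {y\<in>P. orthogonal x y \<and> orthogonal (J x) y}"
    proof -
      have "(\<forall>a\<in>span ?A. orthogonal a y) \<longleftrightarrow> orthogonal x y \<and> orthogonal (J x) y" for y
      proof
        assume "\<forall>a\<in>span ?A. orthogonal a y"
        then show "orthogonal x y \<and> orthogonal (J x) y" by (auto intro: span_base)
      next
        assume h: "orthogonal x y \<and> orthogonal (J x) y"
        show "\<forall>a\<in>span ?A. orthogonal a y"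
        proof
          fix a assume "a \<in> span ?A"
          have "orthogonal y a"
          proof (rule orthogonal_to_span[OF \<open>a \<in> span ?A\<close>])
            fix b assume "b \<in> ?A"
            then show "orthogonal y b" using h by (auto simp: orthogonal_commute)
          qed
          then show "orthogonal a y" by (simp add: orthogonal_commute)
        qed
      qed
      then show ?thesis by auto
    qed
    have sQ: "subspace ?Q"
      unfolding Qeq using less.prems(1) by (auto simp: subspace_def orthogonal_clauses)
    have JQ: "J ` ?Q \<subseteq> ?Q"
    proof
      fix u assume "u \<in> J ` ?Q"
      then obtain y where y: "y \<in> ?Q" "u = J y" by auto
      have "y \<in> {y\<in>P. orthogonal x y \<and> orthogonal (J x) y}" using y(1) by (simp only: Qeq)
      then have yP: "y \<in> P" "inner x y = 0" "inner (J x) y = 0" unfolding orthogonal_def by auto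
      have "J y \<in> P" using yP less.prems(2) by auto
      moreover have "inner x (J y) = 0" using skew2[of x y] yP by simp
      moreover have "inner (J x) (J y) = 0" using yP by (simp add: J_isom)
      ultimately have "J y \<in> {y\<in>P. orthogonal x y \<and> orthogonal (J x) y}" unfolding orthogonal_def by auto
      then show "u \<in> ?Q" unfolding y(2) by (simp only: Qeq)
    qed
    have lt: "dim ?Q < dim P" using d dA by simp
    have "even (dim ?Q)" by (rule less.hyps[OF lt sQ JQ])
    moreover have "dim P = dim ?Q + 2" using d dA by simp
    ultimately show ?thesis by simp
  qed
qed

lemma lorentz_e:
  fixes g :: "'l::euclidean_space \<Rightarrow> 'l \<Rightarrow> real"
  assumes lor: "lorentzian g"
  shows "\<exists>e. g e e = -1 \<and> (\<forall>y. g y e = 0 \<longrightarrow> 0 \<le> g y y \<and> (g y y = 0 \<longrightarrow> y = 0))"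
proof -
  have glin: "\<And>x. linear (g x)" and gsym: "\<And>x y. g x y = g y x"
    using lor unfolding lorentzian_def by auto
  obtain B e where B: "independent B" "span B = UNIV"
    and orth: "\<And>b c. b\<in>B \<Longrightarrow> c\<in>B \<Longrightarrow> b \<noteq> c \<Longrightarrow> g b c = 0"
    and eB: "e \<in> B" "g e e = -1" and ones: "\<And>b. b \<in> B - {e} \<Longrightarrow> g b b = 1"
    using lor unfolding lorentzian_def by blast
  have fin: "finite B" using B(1) by (simp add: finiteI_independent)
  have gl1: "linear (\<lambda>x. g x v)" for v
  proof -
    have "(\<lambda>x. g x v) = g v" by (rule ext) (simp add: gsym)
    then show ?thesis using glin[of v] by simp
  qed
  have gsum: "g (\<Sum>b\<in>B. c b *\<^sub>R b) v = (\<Sum>b\<in>B. c b * g b v)" for c v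
    using linear_sum[OF gl1[of v], of "\<lambda>b. c b *\<^sub>R b" B] linear_scale[OF gl1[of v]] by simp
  have gb: "g b (\<Sum>b'\<in>B. c b' *\<^sub>R b') = c b * g b b" if "b \<in> B" for c b
  proof -
    have "g b (\<Sum>b'\<in>B. c b' *\<^sub>R b') = g (\<Sum>b'\<in>B. c b' *\<^sub>R b') b" by (simp add: gsym)
    also have "\<dots> = (\<Sum>b'\<in>B. c b' * g b' b)" by (rule gsum)
    also have "\<dots> = (\<Sum>b'\<in>B. if b' = b then c b * g b b else 0)"
      by (rule sum.cong) (use orth that in auto)
    also have "\<dots> = c b * g b b" using fin that by simp
    finally show ?thesis .
  qed
  show ?thesis
  proof (intro exI conjI allI impI)
    show "g e e = -1" by fact
  next
    fix y assume ye: "g y e = 0"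
    have "range (\<lambda>u. \<Sum>v\<in>B. u v *\<^sub>R v) = UNIV" using B(2) span_finite[OF fin] by simp
    then obtain c where yc: "y = (\<Sum>b\<in>B. c b *\<^sub>R b)" by blast
    have "g y e = g e y" by (rule gsym)
    also have "\<dots> = c e * g e e" unfolding yc by (rule gb[OF eB(1)])
    finally have "g y e = c e * g e e" .
    then have ce: "c e = 0" using ye eB by simp
    have "g y y = (\<Sum>b\<in>B. c b * g b y)" by (subst (1) yc) (rule gsum)
    also have "\<dots> = (\<Sum>b\<in>B. c b * (c b * g b b))"
      by (rule sum.cong) (simp_all add: yc gb)
    also have "\<dots> = (\<Sum>b\<in>B - {e}. c b * c b)"
    proof -
      have "(\<Sum>b\<in>B. c b * (c b * g b b)) = (\<Sum>b\<in>B - {e}. c b * (c b * g b b))"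
        using fin eB ce by (simp add: sum.remove)
      also have "\<dots> = (\<Sum>b\<in>B - {e}. c b * c b)" by (rule sum.cong) (auto simp: ones)
      finally show ?thesis .
    qed
    finally have yy2: "g y y = (\<Sum>b\<in>B - {e}. c b * c b)" .
    show "0 \<le> g y y" unfolding yy2 by (simp add: sum_nonneg)
    assume "g y y = 0"
    then have "\<forall>b\<in>B - {e}. c b * c b = 0"
      using yy2 fin by (simp add: sum_nonneg_eq_0_iff)
    then have "\<forall>b\<in>B. c b = 0" using ce by auto
    then show "y = 0" using yc by simp
  qed
qed


lemma lorentz_nonneg:
  fixes g :: "'l::euclidean_space \<Rightarrow> 'l \<Rightarrow> real"
  assumes lor: "lorentzian g" and z0: "z \<noteq> 0" and zz: "g z z = 0" and xz: "g x z = 0"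
  shows "0 \<le> g x x \<and> (g x x = 0 \<longrightarrow> x \<in> span {z})"
proof -
  have glin: "\<And>x. linear (g x)" and gsym: "\<And>x y. g x y = g y x"
    using lor unfolding lorentzian_def by auto
  note gs = bil[OF glin gsym]
  obtain e where ee: "g e e = -1" and pos: "\<And>y. g y e = 0 \<Longrightarrow> 0 \<le> g y y \<and> (g y y = 0 \<longrightarrow> y = 0)"
    using lorentz_e[OF lor] by blast
  have ze: "g z e \<noteq> 0"
  proof
    assume "g z e = 0"
    then have "z = 0" using pos[of z] zz by simp
    then show False using z0 by simp
  qed
  define t where "t = g x e / g z e"
  define y where "y = x - t *\<^sub>R z"
  have ye: "g y e = 0" unfolding y_def using ze by (simp add: gs t_def)
  have zx: "g z x = 0" using xz gsym by metis
  have yy: "g y y = g x x" unfolding y_def by (simp add: gs xz zx zz)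
  have "0 \<le> g x x" using pos[OF ye] yy by simp
  moreover have "x \<in> span {z}" if "g x x = 0"
  proof -
    have "y = 0" using pos[OF ye] yy that by simp
    then have "x = t *\<^sub>R z" unfolding y_def by simp
    then show ?thesis by (simp add: span_base span_scale)
  qed
  ultimately show ?thesis by blast
qed

lemma subspace_preimage_line:
  fixes h :: "'a::real_vector \<Rightarrow> 'b::real_vector"
  assumes lh: "linear h" and V: "subspace V"
  shows "subspace {X\<in>V. h X \<in> span {z}}"
  using V lh by (auto simp: subspace_def linear_add linear_scale linear_0 span_add span_scale span_zero)

lemma preimage_line_dim:
  fixes h :: "'a::euclidean_space \<Rightarrow> 'b::euclidean_space"
  assumes lh: "linear h" and V: "subspace V" and z0: "z \<noteq> 0"
  shows "dim V + 1 = dim {X\<in>V. h X \<in> span {z}} + dim {x + y | x y. x \<in> h ` V \<and> y \<in> span {z}}"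
proof -
  let ?K1 = "{X\<in>V. h X \<in> span {z}}"
  have sK1: "subspace ?K1" by (rule subspace_preimage_line[OF lh V])
  have r1: "dim (h ` V) + dim {x\<in>V. h x = 0} = dim V" by (rule rank_nullity[OF lh V])
  have r2: "dim (h ` ?K1) + dim {x\<in>?K1. h x = 0} = dim ?K1" by (rule rank_nullity[OF lh sK1])
  have kers: "{x\<in>?K1. h x = 0} = {x\<in>V. h x = 0}" by (auto simp: span_zero)
  have img: "h ` ?K1 = h ` V \<inter> span {z}" by auto
  have sI: "subspace (h ` V)" by (rule linear_subspace_image[OF lh V])
  have sl: "subspace (span {z})" by simp
  have gr: "dim {x + y | x y. x \<in> h ` V \<and> y \<in> span {z}} + dim (h ` V \<inter> span {z}) = dim (h ` V) + dim (span {z})"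
    by (rule dim_sums_Int[OF sI sl])
  have d1: "dim (span {z}) = 1" using z0 by simp
  show ?thesis using r1 r2 kers img gr d1 by simp
qed

locale kstruct =
  fixes J :: "'v::euclidean_space \<Rightarrow> 'v" and b :: "'v \<Rightarrow> 'v \<Rightarrow> 'l::euclidean_space"
    and g :: "'l \<Rightarrow> 'l \<Rightarrow> real" and z :: 'l
  assumes J_lin: "linear J" and J_sq: "\<And>X. J (J X) = - X"
    and b_lin: "\<And>X. linear (b X)" and b_sym: "\<And>X Y. b X Y = b Y X"
    and b_J: "\<And>X Y. b (J X) Y = - b X (J Y)"
    and flat: "\<And>X Y Z T. g (b X Y) (b Z T) - g (b (J X) Y) (b (J Z) T)
                        = g (b X T) (b Z Y) - g (b (J X) T) (b (J Z) Y)"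
    and g_lin: "\<And>x. linear (g x)" and g_sym: "\<And>x y. g x y = g y x"
    and z0: "z \<noteq> 0" and zz: "g z z = 0" and zb: "\<And>X Y. g z (b X Y) = 0"
    and L3: "\<And>x. g x z = 0 \<Longrightarrow> g x x = 0 \<Longrightarrow> x \<in> span {z}"
begin

lemmas gs = bil[OF g_lin g_sym]
lemmas bs = bil[OF b_lin b_sym]

lemma ell: "u \<in> span {z} \<Longrightarrow> g u (b A B) = 0"
proof -
  assume "u \<in> span {z}"
  then obtain k where "u = k *\<^sub>R z" by (auto simp: span_singleton)
  then show ?thesis by (simp add: gs zb)
qed

lemma ell2: "u \<in> span {z} \<Longrightarrow> g (b A B) u = 0"
  using ell g_sym by metis

lemma ellz: "u \<in> span {z} \<Longrightarrow> g u z = 0"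
proof -
  assume "u \<in> span {z}"
  then obtain k where "u = k *\<^sub>R z" by (auto simp: span_singleton)
  then show ?thesis by (simp add: gs zz)
qed

lemma ellzz: "u \<in> span {z} \<Longrightarrow> g u u = 0"
proof -
  assume "u \<in> span {z}"
  then obtain k where "u = k *\<^sub>R z" by (auto simp: span_singleton)
  then show ?thesis by (simp add: gs zz)
qed

lemma main_ind:
  "subspace V' \<Longrightarrow> J ` V' \<subseteq> V' \<Longrightarrow> subspace D \<Longrightarrow> z \<in> D \<Longrightarrow> (\<forall>X\<in>V'. \<forall>T\<in>V'. b X T \<in> D) \<Longrightarrow>
   \<exists>P. subspace P \<and> P \<subseteq> V' \<and> J ` P \<subseteq> P \<and> dim V' + 2 \<le> dim P + 2 * dim D \<and> (\<forall>S\<in>P. b S S \<in> span {z})"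
proof (induction "dim D" arbitrary: V' D rule: less_induct)
  case less
  note V = less.prems(1) and JV = less.prems(2) and sD = less.prems(3) and zD = less.prems(4)
    and bD = less.prems(5)
  have dD: "1 \<le> dim D"
  proof -
    have "dim {z} \<le> dim D" by (rule dim_subset) (use zD in auto)
    then show ?thesis using z0 by simp
  qed
  show ?case
  proof (cases "\<forall>S\<in>V'. b S S \<in> span {z}")
    case True
    then show ?thesis using V JV dD by (intro exI[of _ V']) auto
  next
    case False
    then obtain Y0 where Y0: "Y0 \<in> V'" "b Y0 Y0 \<notin> span {z}" by blast
    let ?l = "span {z}"
    let ?M = "b Y0 ` V'"
    let ?R = "{x + y | x y. x \<in> ?M \<and> y \<in> ?l}"
    let ?N1 = "{X\<in>V'. b Y0 X \<in> ?l}"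
    let ?N2 = "{X\<in>V'. (b Y0 \<circ> J) X \<in> ?l}"
    let ?N = "?N1 \<inter> ?N2"
    let ?D' = "{x\<in>D. \<forall>Z\<in>V'. g x (b Y0 Z) = 0}"
    have JV': "J ` V' = V'"
    proof
      show "J ` V' \<subseteq> V'" by (rule JV)
      show "V' \<subseteq> J ` V'"
      proof
        fix X assume X: "X \<in> V'"
        then have "J X \<in> V'" using JV by auto
        then have "- J X \<in> V'" using V by (rule subspace_neg[rotated])
        moreover have "X = J (- J X)" using J_sq linear_neg[OF J_lin] by simp
        ultimately show "X \<in> J ` V'" by blast
      qed
    qed
    have lin2: "linear (b Y0 \<circ> J)" by (rule linear_compose[OF J_lin b_lin])
    have M2: "(b Y0 \<circ> J) ` V' = ?M"
    proof -
      have "(b Y0 \<circ> J) ` V' = b Y0 ` (J ` V')" by (rule image_comp[symmetric])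
      also have "\<dots> = ?M" by (simp only: JV')
      finally show ?thesis .
    qed
    have A1: "dim V' + 1 = dim ?N1 + dim ?R" by (rule preimage_line_dim[OF b_lin V z0])
    have A2: "dim V' + 1 = dim ?N2 + dim ?R"
      using preimage_line_dim[OF lin2 V z0] by (simp only: M2)
    have sN1: "subspace ?N1" by (rule subspace_preimage_line[OF b_lin V])
    have sN2: "subspace ?N2" by (rule subspace_preimage_line[OF lin2 V])
    have sN: "subspace ?N" by (rule subspace_inter[OF sN1 sN2])
    have Nsum: "dim {x + y | x y. x \<in> ?N1 \<and> y \<in> ?N2} + dim ?N = dim ?N1 + dim ?N2"
      by (rule dim_sums_Int[OF sN1 sN2])
    have "{x + y | x y. x \<in> ?N1 \<and> y \<in> ?N2} \<subseteq> V'" using V by (auto intro: subspace_add)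
    then have "dim {x + y | x y. x \<in> ?N1 \<and> y \<in> ?N2} \<le> dim V'" by (rule dim_subset)
    then have CA: "dim V' + 2 \<le> dim ?N + 2 * dim ?R" using A1 A2 Nsum by linarith
    have sM: "subspace ?M" by (rule linear_subspace_image[OF b_lin V])
    have sl: "subspace ?l" by simp
    have sR: "subspace ?R" by (rule subspace_sums[OF sM sl])
    have lD: "?l \<subseteq> D" using zD sD by (simp add: span_minimal)
    have RD: "?R \<subseteq> D"
    proof
      fix x assume "x \<in> ?R"
      then obtain m u where x: "x = m + u" "m \<in> ?M" "u \<in> ?l" by blast
      have "m \<in> D" using x(2) bD Y0(1) by auto
      moreover have "u \<in> D" using x(3) lD by auto
      ultimately show "x \<in> D" unfolding x(1) using sD by (simp add: subspace_add)
    qed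
    have bR: "b Y0 Y0 \<in> ?R"
    proof -
      have "b Y0 Y0 + 0 \<in> ?R" using Y0(1) span_zero by blast
      then show ?thesis by simp
    qed
    have zR: "z \<in> ?R"
    proof -
      have "0 \<in> V'" using V by (rule subspace_0)
      then have "b Y0 0 \<in> ?M" by blast
      then have "0 \<in> ?M" using linear_0[OF b_lin] by simp
      then have "0 + z \<in> ?R" using span_base[of z "{z}"] by blast
      then show ?thesis by simp
    qed
    have R2: "2 \<le> dim ?R"
    proof -
      have "dim (insert (b Y0 Y0) {z}) = 2" using Y0(2) z0 by (simp add: dim_insert)
      moreover have "dim (insert (b Y0 Y0) {z}) \<le> dim ?R" by (rule dim_subset) (use bR zR in auto)
      ultimately show ?thesis by simp
    qed
    have sD': "subspace ?D'"
      unfolding subspace_def using sD by (auto simp: gs subspace_0 subspace_add subspace_scale)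
    have zD': "z \<in> ?D'" using zD zb by auto
    have int: "?D' \<inter> ?R \<subseteq> ?l"
    proof
      fix x assume x: "x \<in> ?D' \<inter> ?R"
      then obtain m u where xmu: "x = m + u" "m \<in> ?M" "u \<in> ?l" by blast
      obtain Z where Z: "Z \<in> V'" "m = b Y0 Z" using xmu(2) by blast
      have gxm: "g x m = 0" using x Z by auto
      have gmz: "g m z = 0" using zb g_sym Z(2) by metis
      have gxz: "g x z = 0" unfolding xmu(1) using gmz ellz[OF xmu(3)] by (simp add: gs)
      have gmu: "g m u = 0" unfolding Z(2) by (rule ell2[OF xmu(3)])
      have gxu: "g x u = 0" unfolding xmu(1) using gmu ellzz[OF xmu(3)] by (simp add: gs)
      have gxx: "g x x = 0" using gxm gxu by (subst (2) xmu(1)) (simp add: gs)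
      show "x \<in> ?l" by (rule L3[OF gxz gxx])
    qed
    have CB: "dim ?D' + dim ?R \<le> dim D + 1"
    proof -
      have "dim (?D' \<inter> ?R) \<le> dim ?l" by (rule dim_subset[OF int])
      then have i1: "dim (?D' \<inter> ?R) \<le> 1" using z0 by simp
      have gr: "dim {x + y | x y. x \<in> ?D' \<and> y \<in> ?R} + dim (?D' \<inter> ?R) = dim ?D' + dim ?R"
        by (rule dim_sums_Int[OF sD' sR])
      have "{x + y | x y. x \<in> ?D' \<and> y \<in> ?R} \<subseteq> D"
      proof
        fix v assume "v \<in> {x + y | x y. x \<in> ?D' \<and> y \<in> ?R}"
        then obtain p q where "v = p + q" "p \<in> ?D'" "q \<in> ?R" by blast
        moreover have "q \<in> D" using \<open>q \<in> ?R\<close> RD by blast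
        ultimately show "v \<in> D" using sD by (simp add: subspace_add)
      qed
      then have "dim {x + y | x y. x \<in> ?D' \<and> y \<in> ?R} \<le> dim D" by (rule dim_subset)
      then show ?thesis using i1 gr by linarith
    qed
    have lt: "dim ?D' < dim D" using CB R2 by linarith
    have NJ: "J ` ?N \<subseteq> ?N"
    proof
      fix u assume "u \<in> J ` ?N"
      then obtain X where X: "X \<in> ?N" "u = J X" by blast
      have "J X \<in> V'" using X JV by auto
      moreover have "b Y0 (J X) \<in> ?l" using X by auto
      moreover have "b Y0 (J (J X)) \<in> ?l"
      proof -
        have "b Y0 (J (J X)) = - b Y0 X" by (simp add: J_sq linear_neg[OF b_lin])
        moreover have "b Y0 X \<in> ?l" using X by auto
        ultimately show ?thesis by (simp add: span_neg)
      qed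
      ultimately show "u \<in> ?N" using X(2) by auto
    qed
    have bN: "\<forall>X\<in>?N. \<forall>T\<in>?N. b X T \<in> ?D'"
    proof (intro ballI)
      fix X T assume X: "X \<in> ?N" and T: "T \<in> ?N"
      have XV: "X \<in> V'" and TV: "T \<in> V'" using X T by auto
      have bX: "b Y0 X \<in> ?l" and bJX: "b Y0 (J X) \<in> ?l" using X by auto
      have bT: "b Y0 T \<in> ?l" and bJT: "b Y0 (J T) \<in> ?l" using T by auto
      have "b X T \<in> D" using bD XV TV by auto
      moreover have "\<forall>Z\<in>V'. g (b X T) (b Y0 Z) = 0"
      proof
        fix Z assume Z: "Z \<in> V'"
        have f1: "g (b X T) (b Z Y0) - g (b (J X) T) (b (J Z) Y0)
                  = g (b X Y0) (b Z T) - g (b (J X) Y0) (b (J Z) T)" by (rule flat)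
        have r1: "g (b X Y0) (b Z T) = 0" using ell[OF bX] b_sym by metis
        have r2: "g (b (J X) Y0) (b (J Z) T) = 0" using ell[OF bJX] b_sym by metis
        have f2: "g (b X T) (b Y0 Z) - g (b (J X) T) (b (J Y0) Z)
                  = g (b X Z) (b Y0 T) - g (b (J X) Z) (b (J Y0) T)" by (rule flat)
        have r3: "g (b X Z) (b Y0 T) = 0" by (rule ell2[OF bT])
        have "b (J Y0) T = - b Y0 (J T)" by (rule b_J)
        then have "b (J Y0) T \<in> ?l" using bJT by (simp add: span_neg)
        then have r4: "g (b (J X) Z) (b (J Y0) T) = 0" by (rule ell2)
        have e1: "b Z Y0 = b Y0 Z" by (rule b_sym)
        have e2: "b (J Z) Y0 = - b (J Y0) Z" using b_J b_sym by metis
        have s1: "g (b X T) (b Y0 Z) + g (b (J X) T) (b (J Y0) Z) = 0"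
          using f1 r1 r2 unfolding e1 e2 by (simp add: gs)
        have s2: "g (b X T) (b Y0 Z) - g (b (J X) T) (b (J Y0) Z) = 0"
          using f2 r3 r4 by simp
        from s1 s2 show "g (b X T) (b Y0 Z) = 0" by linarith
      qed
      ultimately show "b X T \<in> ?D'" by blast
    qed
    obtain P where P: "subspace P" "P \<subseteq> ?N" "J ` P \<subseteq> P" "dim ?N + 2 \<le> dim P + 2 * dim ?D'"
      "\<forall>S\<in>P. b S S \<in> span {z}"
      using less.hyps[OF lt sN NJ sD' zD' bN] by blast
    show ?thesis
    proof (intro exI conjI)
      show "subspace P" "J ` P \<subseteq> P" "\<forall>S\<in>P. b S S \<in> span {z}" using P by auto
      show "P \<subseteq> V'" using P(2) by auto
      show "dim V' + 2 \<le> dim P + 2 * dim D" using CA P(4) CB by linarith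
    qed
  qed
qed

end


theorem proposition6:
  fixes J :: "'v::euclidean_space \<Rightarrow> 'v"
    and g :: "'l::euclidean_space \<Rightarrow> 'l \<Rightarrow> real"
    and \<alpha> :: "'v \<Rightarrow> 'v \<Rightarrow> 'l"
    and w :: 'l
    and n :: nat
  defines "\<beta> \<equiv> (\<lambda>X Y. (\<alpha> X Y + \<alpha> (J X) (J Y), \<alpha> X (J Y) - \<alpha> (J X) Y))"
    and "\<gamma> \<equiv> (\<lambda>X Y. (\<alpha> X Y, \<alpha> X (J Y)))"
  assumes dimV: "DIM('v) = 2 * n"
    and J_lin: "linear J"
    and J_sq: "\<And>X. J (J X) = - X"
    and J_isom: "\<And>X Y. inner (J X) (J Y) = inner X Y"
    and p_ge: "DIM('l) \<ge> 2"
    and lor: "lorentzian g"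
    and \<alpha>_lin: "\<And>X. linear (\<alpha> X)"
    and \<alpha>_sym: "\<And>X Y. \<alpha> X Y = \<alpha> Y X"
    and w_light: "w \<noteq> 0" "g w w = 0"
    and w_prop: "\<And>X Y. g (\<alpha> X Y) w = - inner X Y"
    and flat: "flat_form g \<beta>"
    and mixed: "\<And>X Y Z T. Wip g (\<beta> X Y) (\<gamma> Z T) = Wip g (\<beta> X T) (\<gamma> Z Y)"
    and degen: "degenerate_sub g (Sspace \<beta>)"
    and s_le: "int (dim (fst ` Sspace \<beta>)) \<le> int n - 1"
  shows "\<exists>P m. subspace P \<and> J ` P \<subseteq> P \<and> dim P = 2 * m \<and>
           int m \<ge> int n - int (dim (fst ` Sspace \<beta>)) + 1 \<and>
           (\<forall>S\<in>P. g (\<alpha> S S) (\<alpha> (J S) (J S)) - g (\<alpha> S (J S)) (\<alpha> S (J S)) \<le> 0)"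
proof -
  have glin: "\<And>x. linear (g x)" and gsym: "\<And>x y. g x y = g y x"
    using lor unfolding lorentzian_def by auto
  note gs = bil[OF glin gsym]
  note as = bil[OF \<alpha>_lin \<alpha>_sym]
  define b where "b = (\<lambda>X Y. \<alpha> X Y + \<alpha> (J X) (J Y))"
  have Jneg: "\<And>X. J (- X) = - J X" using linear_neg[OF J_lin] by simp
  have \<beta>_eq: "\<beta> X Y = (b X Y, - b (J X) Y)" for X Y
    unfolding \<beta>_def b_def by (simp add: J_sq as)
  have b_lin: "linear (b X)" for X
  proof -
    have l2: "linear (\<lambda>Y. \<alpha> (J X) (J Y))"
      using linear_compose[OF J_lin \<alpha>_lin[of "J X"]] by (simp add: o_def)
    show ?thesis unfolding b_def by (rule linear_compose_add[OF \<alpha>_lin l2])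
  qed
  have b_sym: "b X Y = b Y X" for X Y unfolding b_def by (simp add: \<alpha>_sym)
  have b_J: "b (J X) Y = - b X (J Y)" for X Y unfolding b_def by (simp add: J_sq as)
  note bs = bil[OF b_lin b_sym]
  have flat': "g (b X Y) (b Z T) - g (b (J X) Y) (b (J Z) T)
             = g (b X T) (b Z Y) - g (b (J X) T) (b (J Z) Y)" for X Y Z T
    using flat unfolding flat_form_def Wip_def \<beta>_eq by (simp add: gs)
  obtain v where v: "v \<in> Sspace \<beta>" "v \<noteq> 0" "\<And>u. u \<in> Sspace \<beta> \<Longrightarrow> Wip g v u = 0"
    using degen unfolding degenerate_sub_def by blast
  let ?G = "{\<beta> X Y | X Y. True}"
  have \<beta>S: "\<beta> X Y \<in> Sspace \<beta>" for X Y unfolding Sspace_def by (rule span_base) blast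
  have hv: "g (fst v) (b X Y) = 0 \<and> g (snd v) (b (J X) Y) = 0" for X Y
  proof -
    have h1: "g (fst v) (b X Y) + g (snd v) (b (J X) Y) = 0"
      using v(3)[OF \<beta>S[of X Y]] unfolding Wip_def \<beta>_eq by (simp add: gs)
    have e: "b (J Y) X = - b (J X) Y" using b_J b_sym by metis
    have h2: "g (fst v) (b X Y) - g (snd v) (b (J X) Y) = 0"
      using v(3)[OF \<beta>S[of Y X]] unfolding Wip_def \<beta>_eq e by (simp add: gs b_sym[of Y X])
    from h1 h2 show ?thesis by linarith
  qed
  have hv1: "g (fst v) (b X Y) = 0" for X Y using hv by blast
  have hv2: "g (snd v) (b X Y) = 0" for X Y
  proof -
    have "J (- J X) = X" using Jneg J_sq by simp
    then show ?thesis using hv[of "- J X" Y] by simp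
  qed
  let ?U = "fst ` Sspace \<beta>"
  have sU: "subspace ?U" unfolding Sspace_def by (rule linear_subspace_image[OF linear_fst subspace_span])
  have bU: "b X Y \<in> ?U" for X Y
  proof -
    have "fst (\<beta> X Y) = b X Y" by (simp add: \<beta>_eq)
    then show ?thesis using \<beta>S[of X Y] by (metis image_eqI)
  qed
  have v1U: "fst v \<in> ?U" using v(1) by blast
  have v2U: "snd v \<in> ?U"
  proof -
    have "snd ` ?G \<subseteq> ?U"
    proof
      fix x assume "x \<in> snd ` ?G"
      then obtain X Y where "x = snd (\<beta> X Y)" by blast
      then have "x = - b (J X) Y" by (simp add: \<beta>_eq)
      also have "\<dots> = b (- J X) Y" by (simp add: bs)
      finally show "x \<in> ?U" using bU by simp
    qed
    then have "span (snd ` ?G) \<subseteq> ?U" using sU by (rule span_minimal)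
    moreover have eq: "span (snd ` ?G) = snd ` span ?G" by (rule linear_span_image[OF linear_snd])
    ultimately have "snd ` span ?G \<subseteq> ?U" by (simp only: eq)
    moreover have "snd v \<in> snd ` span ?G" using v(1) unfolding Sspace_def by blast
    ultimately show ?thesis by blast
  qed
  define z where "z = (if fst v \<noteq> 0 then fst v else snd v)"
  have z0: "z \<noteq> 0" using v(2) unfolding z_def by (auto simp: prod_eq_iff)
  have zU: "z \<in> ?U" unfolding z_def using v1U v2U by simp
  have zb: "g z (b X Y) = 0" for X Y unfolding z_def using hv1 hv2 by simp
  have zz: "g z z = 0"
  proof -
    have "?U = span (fst ` ?G)" unfolding Sspace_def by (simp add: linear_span_image[OF linear_fst])
    then have zs: "z \<in> span (fst ` ?G)" using zU by simp
    have "\<And>x. x \<in> fst ` ?G \<Longrightarrow> g z x = 0"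
    proof -
      fix x assume "x \<in> fst ` ?G"
      then obtain X Y where "x = fst (\<beta> X Y)" by blast
      then show "g z x = 0" by (simp add: \<beta>_eq zb)
    qed
    then show ?thesis using linear_eq_0_on_span[OF glin[of z] _ zs] by blast
  qed
  have L3: "x \<in> span {z}" if "g x z = 0" "g x x = 0" for x
    using lorentz_nonneg[OF lor z0 zz that(1)] that(2) by simp
  have KS: "kstruct J b g z"
    by (rule kstruct.intro[OF J_lin J_sq b_lin b_sym b_J flat' glin gsym z0 zz zb L3])
  interpret K: kstruct J b g z by (rule KS)
  have JU: "J ` UNIV \<subseteq> UNIV" by simp
  have bU': "\<forall>X\<in>UNIV. \<forall>T\<in>UNIV. b X T \<in> ?U" using bU by blast
  have ex: "\<exists>P. subspace P \<and> P \<subseteq> UNIV \<and> J ` P \<subseteq> P \<and> dim (UNIV::'v set) + 2 \<le> dim P + 2 * dim ?U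
      \<and> (\<forall>S\<in>P. b S S \<in> span {z})"
    by (rule K.main_ind[OF subspace_UNIV JU sU zU bU'])
  then obtain P where P: "subspace P" "J ` P \<subseteq> P" "dim (UNIV::'v set) + 2 \<le> dim P + 2 * dim ?U"
    "\<forall>S\<in>P. b S S \<in> span {z}"
    by blast
  have "even (dim P)" by (rule even_dim[OF J_lin J_sq J_isom P(1) P(2)])
  then obtain m where m: "dim P = 2 * m" by (auto elim: evenE)
  have dU: "dim (UNIV::'v set) = 2 * n" using dimV by simp
  have mb: "int m \<ge> int n - int (dim ?U) + 1" using P(3) m dU by linarith
  have skew: "inner S (J S) = 0" for S
  proof -
    have "inner S (J S) = inner (J S) (J (J S))" by (simp add: J_isom)
    also have "\<dots> = - inner S (J S)" by (simp add: J_sq inner_commute)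
    finally show ?thesis by simp
  qed
  have Q: "g (\<alpha> S S) (\<alpha> (J S) (J S)) - g (\<alpha> S (J S)) (\<alpha> S (J S)) \<le> 0" if S: "S \<in> P" for S
  proof -
    define A where "A = \<alpha> S S"
    define B where "B = \<alpha> (J S) (J S)"
    define C where "C = \<alpha> S (J S)"
    obtain k where k: "b S S = k *\<^sub>R z" using P(4) S by (auto simp: span_singleton)
    have bAB: "b S S = A + B" unfolding b_def A_def B_def by simp
    have e0: "g (A + B) (A + B) = 0" unfolding bAB[symmetric] k by (simp add: gs zz)
    have e1: "g (A + B) (A + B) = g A A + 2 * g A B + g B B" by (simp add: gs gsym[of B A])
    have e2: "g (A - B) (A - B) = g A A - 2 * g A B + g B B" by (simp add: gs gsym[of B A])
    have gw1: "g (A - B) w = 0" unfolding A_def B_def by (simp add: gs w_prop J_isom)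
    have gw2: "g C w = 0" unfolding C_def by (simp add: w_prop skew)
    have n1: "0 \<le> g (A - B) (A - B)" using lorentz_nonneg[OF lor w_light(1) w_light(2) gw1] by simp
    have n2: "0 \<le> g C C" using lorentz_nonneg[OF lor w_light(1) w_light(2) gw2] by simp
    have "g A B - g C C \<le> 0" using e0 e1 e2 n1 n2 by linarith
    then show ?thesis unfolding A_def B_def C_def .
  qed
  show ?thesis
    using P(1) P(2) m mb Q by blast
qed

end
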